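(* The center $Z(X)$ of any $\mathsf{T_{z}S}$-closed semigroup $X$ is periodic.
   Context: $\mathsf{T_{z}S}$ is the class of Hausdorff zero-dimensional topological semigroups. A semigroup $X$ is $\mathsf{T_{z}S}$-closed if for every isomorphic topological embedding of $X$ (discrete topology) into some $Y\in\mathsf{T_{z}S}$ the image is closed in $Y$. $Z(X)=\{z\in X:\forall x\ (xz=zx)\}$. A semigroup is periodic if each element has some power $x^n$ ($n\ge1$) that is an idempotent. *)

theory Defs
  imports "HOL-Analysis.Analysis"
begin

definition zero_dimensional_space :: "'b topology \<Rightarrow> bool" where
  "zero_dimensional_space T \<longleftrightarrow>
     (\<forall>U x. openin T U \<and> x \<in> U \<longrightarrow>
        (\<exists>V. openin T V \<and> closedin T V \<and> x \<in> V \<and> V \<subseteq> U))"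

text \<open>A topological semigroup: carrier topspace T, multiplication m, associative on the
  carrier and jointly continuous (which in particular makes the carrier closed under m).\<close>
definition topological_semigroup :: "'b topology \<Rightarrow> ('b \<Rightarrow> 'b \<Rightarrow> 'b) \<Rightarrow> bool" where
  "topological_semigroup T m \<longleftrightarrow>
     (\<forall>a\<in>topspace T. \<forall>b\<in>topspace T. \<forall>c\<in>topspace T. m (m a b) c = m a (m b c)) \<and>
     continuous_map (prod_topology T T) T (\<lambda>p. m (fst p) (snd p))"

definition TzS :: "'b topology \<Rightarrow> ('b \<Rightarrow> 'b \<Rightarrow> 'b) \<Rightarrow> bool" where
  "TzS T m \<longleftrightarrow> topological_semigroup T m \<and> Hausdorff_space T \<and> zero_dimensional_space T"

definition iso_top_embedding :: "'b topology \<Rightarrow> ('b \<Rightarrow> 'b \<Rightarrow> 'b) \<Rightarrow> ('a::semigroup_mult \<Rightarrow> 'b) \<Rightarrow> bool" where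
  "iso_top_embedding T m h \<longleftrightarrow>
     inj h \<and> (\<forall>x y. h (x * y) = m (h x) (h y)) \<and>
     embedding_map (discrete_topology UNIV) T h"

text \<open>T_zS-closedness, with the ambient semigroups Y ranging over those whose carrier
  lives in the type 'b (selected by the type argument).\<close>
definition TzS_closed_in :: "'b itself \<Rightarrow> 'a::semigroup_mult itself \<Rightarrow> bool" where
  "TzS_closed_in TYPE('b) TYPE('a) \<longleftrightarrow>
     (\<forall>(T::'b topology) m (h::'a \<Rightarrow> 'b). TzS T m \<and> iso_top_embedding T m h \<longrightarrow> closedin T (range h))"

text \<open>Positive powers in a semigroup: spow x n = x^(n+1).\<close>
fun spow :: "'a::semigroup_mult \<Rightarrow> nat \<Rightarrow> 'a" where
  "spow x 0 = x"
| "spow x (Suc n) = x * spow x n"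

definition center :: "'a::semigroup_mult set" where
  "center = {z. \<forall>x. x * z = z * x}"

definition periodic_set :: "'a::semigroup_mult set \<Rightarrow> bool" where
  "periodic_set S \<longleftrightarrow> (\<forall>x\<in>S. \<exists>n. spow x n * spow x n = spow x n)"

end

theory Submission
  imports Defs
begin

lemma spow_add: "spow (x::'a::semigroup_mult) a * spow x b = spow x (a + b + 1)"
  by (induction a) (simp_all add: mult.assoc)

definition zpow :: "'a::semigroup_mult \<Rightarrow> nat \<Rightarrow> 'a" where
  "zpow z n = spow z (n - 1)"

lemma zpow_add: "0 < n \<Longrightarrow> 0 < m \<Longrightarrow> zpow z n * zpow z m = zpow z (n + m)"
proof -
  assume "0 < n" "0 < m"
  then have "n + m - 1 = (n - 1) + (m - 1) + 1" by simp
  then show ?thesis unfolding zpow_def by (simp only: spow_add)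
qed

lemma spow_comm: "z \<in> center \<Longrightarrow> y * spow z n = spow z n * y"
proof (induction n)
  case 0 then show ?case by (simp add: center_def)
next
  case (Suc n)
  have "y * spow z (Suc n) = (y * z) * spow z n" by (simp add: mult.assoc)
  also have "\<dots> = z * (y * spow z n)" using Suc.prems by (simp add: center_def mult.assoc)
  also have "\<dots> = spow z (Suc n) * y" using Suc by (simp add: mult.assoc)
  finally show ?case .
qed

lemma zpow_comm: "z \<in> center \<Longrightarrow> y * zpow z n = zpow z n * y"
  unfolding zpow_def by (rule spow_comm)

definition Mk :: "nat \<Rightarrow> nat set" where "Mk k = {n. Suc k \<le> n \<and> fact k dvd n}"
definition Bs :: "'a::semigroup_mult \<Rightarrow> 'a \<Rightarrow> nat \<Rightarrow> 'a set" where
  "Bs z a k = (\<lambda>n. a * zpow z n) ` Mk k"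
definition gen :: "'a::semigroup_mult \<Rightarrow> 'a \<Rightarrow> 'a set set" where
  "gen z a = {S. \<exists>k. Bs z a k \<subseteq> S}"
definition prin :: "'a \<Rightarrow> 'a set set" where "prin x = {S. x \<in> S}"
definition sprod :: "'a::semigroup_mult set \<Rightarrow> 'a set \<Rightarrow> 'a set" where
  "sprod A B = {x * y | x y. x \<in> A \<and> y \<in> B}"
definition mm :: "'a::semigroup_mult set set \<Rightarrow> 'a set set \<Rightarrow> 'a set set" where
  "mm F G = {S. \<exists>A\<in>F. \<exists>B\<in>G. sprod A B \<subseteq> S}"

lemma Mk_mono: "k \<le> k' \<Longrightarrow> Mk k' \<subseteq> Mk k"
proof
  fix n assume "k \<le> k'" "n \<in> Mk k'"
  then have "fact k dvd (fact k' :: nat)" by (simp add: fact_dvd)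
  moreover have "fact k' dvd n" "Suc k' \<le> n" using \<open>n \<in> Mk k'\<close> by (auto simp: Mk_def)
  ultimately show "n \<in> Mk k" using \<open>k \<le> k'\<close> unfolding Mk_def by (auto intro: dvd_trans)
qed

lemma Mk_pos: "n \<in> Mk k \<Longrightarrow> 0 < n" by (auto simp: Mk_def)

lemma Mk_elem: "fact k * Suc k \<in> Mk k"
proof -
  have "(1::nat) \<le> fact k" by (simp add: Suc_leI)
  then have "Suc k \<le> fact k * Suc k" by (metis mult_le_mono1 mult_1)
  then show ?thesis by (simp add: Mk_def)
qed

lemma Mk_add: "n \<in> Mk k \<Longrightarrow> m \<in> Mk k \<Longrightarrow> n + m \<in> Mk k"
  by (auto simp: Mk_def)

lemma Bs_ne: "Bs z a k \<noteq> {}" using Mk_elem by (auto simp: Bs_def)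

lemma Bs_mono: "k \<le> k' \<Longrightarrow> Bs z a k' \<subseteq> Bs z a k"
  unfolding Bs_def using Mk_mono by blast

lemma sprod_assoc: "sprod (sprod A B) C = sprod A (sprod B C)"
proof (rule set_eqI, rule iffI)
  fix w assume "w \<in> sprod (sprod A B) C"
  then obtain a b c where "a \<in> A" "b \<in> B" "c \<in> C" "w = a * b * c" unfolding sprod_def by blast
  then show "w \<in> sprod A (sprod B C)" unfolding sprod_def by (auto simp: mult.assoc)
next
  fix w assume "w \<in> sprod A (sprod B C)"
  then obtain a b c where "a \<in> A" "b \<in> B" "c \<in> C" "w = a * (b * c)" unfolding sprod_def by blast
  then show "w \<in> sprod (sprod A B) C" unfolding sprod_def by (auto simp: mult.assoc[symmetric])
qed

lemma sprod_mono: "A \<subseteq> A' \<Longrightarrow> B \<subseteq> B' \<Longrightarrow> sprod A B \<subseteq> sprod A' B'"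
  unfolding sprod_def by blast

lemma mm3: "mm (mm F G) H = {S. \<exists>A\<in>F. \<exists>B\<in>G. \<exists>C\<in>H. sprod (sprod A B) C \<subseteq> S}"
proof (rule set_eqI, rule iffI)
  fix S assume "S \<in> mm (mm F G) H"
  then obtain D C A B where "D \<in> mm F G" "C \<in> H" "sprod D C \<subseteq> S" "A \<in> F" "B \<in> G" "sprod A B \<subseteq> D"
    unfolding mm_def by blast
  then have "sprod (sprod A B) C \<subseteq> S" using sprod_mono[of "sprod A B" D C C] by blast
  then show "S \<in> {S. \<exists>A\<in>F. \<exists>B\<in>G. \<exists>C\<in>H. sprod (sprod A B) C \<subseteq> S}"
    using \<open>A \<in> F\<close> \<open>B \<in> G\<close> \<open>C \<in> H\<close> by blast
next
  fix S assume "S \<in> {S. \<exists>A\<in>F. \<exists>B\<in>G. \<exists>C\<in>H. sprod (sprod A B) C \<subseteq> S}"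
  then obtain A B C where "A \<in> F" "B \<in> G" "C \<in> H" "sprod (sprod A B) C \<subseteq> S" by blast
  moreover have "sprod A B \<in> mm F G" unfolding mm_def using \<open>A \<in> F\<close> \<open>B \<in> G\<close> by blast
  ultimately show "S \<in> mm (mm F G) H" unfolding mm_def by blast
qed

lemma mm3': "mm F (mm G H) = {S. \<exists>A\<in>F. \<exists>B\<in>G. \<exists>C\<in>H. sprod A (sprod B C) \<subseteq> S}"
proof (rule set_eqI, rule iffI)
  fix S assume "S \<in> mm F (mm G H)"
  then obtain D A B C where "A \<in> F" "D \<in> mm G H" "sprod A D \<subseteq> S" "B \<in> G" "C \<in> H" "sprod B C \<subseteq> D"
    unfolding mm_def by blast
  then have "sprod A (sprod B C) \<subseteq> S" using sprod_mono[of A A "sprod B C" D] by blast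
  then show "S \<in> {S. \<exists>A\<in>F. \<exists>B\<in>G. \<exists>C\<in>H. sprod A (sprod B C) \<subseteq> S}"
    using \<open>A \<in> F\<close> \<open>B \<in> G\<close> \<open>C \<in> H\<close> by blast
next
  fix S assume "S \<in> {S. \<exists>A\<in>F. \<exists>B\<in>G. \<exists>C\<in>H. sprod A (sprod B C) \<subseteq> S}"
  then obtain A B C where "A \<in> F" "B \<in> G" "C \<in> H" "sprod A (sprod B C) \<subseteq> S" by blast
  moreover have "sprod B C \<in> mm G H" unfolding mm_def using \<open>B \<in> G\<close> \<open>C \<in> H\<close> by blast
  ultimately show "S \<in> mm F (mm G H)" unfolding mm_def by blast
qed

lemma mm_assoc: "mm (mm F G) H = mm F (mm G H)"
  unfolding mm3 mm3' sprod_assoc ..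

lemma mm_prin_prin: "mm (prin x) (prin y) = prin (x * y)"
proof (rule set_eqI, rule iffI)
  fix S assume "S \<in> mm (prin x) (prin y)"
  then obtain A B where "x \<in> A" "y \<in> B" "sprod A B \<subseteq> S" unfolding mm_def prin_def by blast
  then show "S \<in> prin (x * y)" unfolding prin_def sprod_def by blast
next
  fix S assume "S \<in> prin (x * y)"
  then have "sprod {x} {y} \<subseteq> S" unfolding prin_def sprod_def by blast
  moreover have "{x} \<in> prin x" "{y} \<in> prin y" unfolding prin_def by auto
  ultimately show "S \<in> mm (prin x) (prin y)" unfolding mm_def by blast
qed

lemma mm_prin_gen: "mm (prin x) (gen z b) = gen z (x * b)"
proof (rule set_eqI; rule iffI)
  fix S assume "S \<in> mm (prin x) (gen z b)"
  then obtain A B k where ABk: "x \<in> A" "sprod A B \<subseteq> S" "Bs z b k \<subseteq> B"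
    by (auto simp: mm_def prin_def gen_def)
  have "Bs z (x*b) k \<subseteq> S"
  proof
    fix y assume "y \<in> Bs z (x*b) k"
    then obtain n where n: "n \<in> Mk k" "y = x * b * zpow z n" by (auto simp: Bs_def)
    then have "b * zpow z n \<in> B" using ABk(3) by (auto simp: Bs_def)
    moreover have "y = x * (b * zpow z n)" using n(2) by (simp add: mult.assoc)
    ultimately show "y \<in> S" using ABk(1,2) unfolding sprod_def by blast
  qed
  then show "S \<in> gen z (x * b)" by (auto simp: gen_def)
next
  fix S assume "S \<in> gen z (x * b)"
  then obtain k where k: "Bs z (x*b) k \<subseteq> S" by (auto simp: gen_def)
  have "sprod {x} (Bs z b k) \<subseteq> S"
  proof
    fix y assume "y \<in> sprod {x} (Bs z b k)"
    then obtain n where n: "n \<in> Mk k" "y = x * (b * zpow z n)" by (auto simp: sprod_def Bs_def)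
    then have "y = x * b * zpow z n" by (simp add: mult.assoc)
    then show "y \<in> S" using k n(1) by (auto simp: Bs_def)
  qed
  moreover have "{x} \<in> prin x" "Bs z b k \<in> gen z b" by (auto simp: prin_def gen_def)
  ultimately show "S \<in> mm (prin x) (gen z b)" unfolding mm_def by blast
qed

lemma swapy: "z \<in> center \<Longrightarrow> a * zpow z n * y = a * y * zpow z n"
  by (metis mult.assoc zpow_comm)

lemma mm_gen_prin: assumes z: "z \<in> center" shows "mm (gen z a) (prin y) = gen z (a * y)"
proof (rule set_eqI; rule iffI)
  fix S assume "S \<in> mm (gen z a) (prin y)"
  then obtain A B k where ABk: "y \<in> B" "sprod A B \<subseteq> S" "Bs z a k \<subseteq> A"
    by (auto simp: mm_def prin_def gen_def)
  have "Bs z (a*y) k \<subseteq> S"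
  proof
    fix w assume "w \<in> Bs z (a*y) k"
    then obtain n where n: "n \<in> Mk k" "w = a * y * zpow z n" by (auto simp: Bs_def)
    then have "a * zpow z n \<in> A" using ABk(3) by (auto simp: Bs_def)
    moreover have "w = (a * zpow z n) * y" using n(2) swapy[OF z] by simp
    ultimately show "w \<in> S" using ABk(1,2) unfolding sprod_def by blast
  qed
  then show "S \<in> gen z (a * y)" by (auto simp: gen_def)
next
  fix S assume "S \<in> gen z (a * y)"
  then obtain k where k: "Bs z (a*y) k \<subseteq> S" by (auto simp: gen_def)
  have "sprod (Bs z a k) {y} \<subseteq> S"
  proof
    fix w assume "w \<in> sprod (Bs z a k) {y}"
    then obtain n where n: "n \<in> Mk k" "w = (a * zpow z n) * y" by (auto simp: sprod_def Bs_def)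
    then have "w = a * y * zpow z n" using swapy[OF z] by simp
    then show "w \<in> S" using k n(1) by (auto simp: Bs_def)
  qed
  moreover have "{y} \<in> prin y" "Bs z a k \<in> gen z a" by (auto simp: prin_def gen_def)
  ultimately show "S \<in> mm (gen z a) (prin y)" unfolding mm_def by blast
qed

lemma zmul: assumes z: "z \<in> center" and "0 < n" "0 < m"
  shows "(a * zpow z n) * (b * zpow z m) = (a * b) * zpow z (n + m)"
proof -
  have "(a * zpow z n) * (b * zpow z m) = a * (zpow z n * b) * zpow z m" by (simp only: mult.assoc)
  also have "\<dots> = a * (b * zpow z n) * zpow z m" by (simp only: zpow_comm[OF z])
  also have "\<dots> = a * b * (zpow z n * zpow z m)" by (simp only: mult.assoc)
  also have "\<dots> = (a * b) * zpow z (n + m)" by (simp only: zpow_add[OF assms(2,3)])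
  finally show ?thesis .
qed

lemma mm_gen_gen: assumes z: "z \<in> center" shows "mm (gen z a) (gen z b) = gen z (a * b)"
proof (rule set_eqI; rule iffI)
  fix S assume "S \<in> mm (gen z a) (gen z b)"
  then obtain A B k1 k2 where AB: "sprod A B \<subseteq> S" "Bs z a k1 \<subseteq> A" "Bs z b k2 \<subseteq> B"
    by (auto simp: mm_def gen_def)
  define K where "K = max k1 k2"
  define n1 where "n1 = fact K * Suc K"
  define L where "L = n1 + Suc K"
  have n1: "n1 \<in> Mk K" unfolding n1_def by (rule Mk_elem)
  have "Bs z (a*b) L \<subseteq> S"
  proof
    fix x assume "x \<in> Bs z (a*b) L"
    then obtain n where n: "n \<in> Mk L" "x = a * b * zpow z n" by (auto simp: Bs_def)
    define n2 where "n2 = n - n1"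
    have "fact K dvd n" using n(1) Mk_mono[of K L] unfolding L_def by (auto simp: Mk_def)
    moreover have "fact K dvd n1" by (simp add: n1_def)
    ultimately have "fact K dvd n2" unfolding n2_def by (simp add: dvd_diff_nat)
    moreover have "Suc K \<le> n2" using n(1) unfolding n2_def L_def Mk_def by auto
    ultimately have n2: "n2 \<in> Mk K" by (simp add: Mk_def)
    have "n = n1 + n2" using n(1) unfolding n2_def L_def Mk_def by auto
    then have "x = (a * zpow z n1) * (b * zpow z n2)"
      using n(2) zmul[OF z Mk_pos[OF n1] Mk_pos[OF n2]] by simp
    moreover have "a * zpow z n1 \<in> A" using AB(2) Mk_mono[of k1 K] n1 unfolding K_def Bs_def by auto
    moreover have "b * zpow z n2 \<in> B" using AB(3) Mk_mono[of k2 K] n2 unfolding K_def Bs_def by auto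
    ultimately show "x \<in> S" using AB(1) unfolding sprod_def by blast
  qed
  then show "S \<in> gen z (a * b)" by (auto simp: gen_def)
next
  fix S assume "S \<in> gen z (a * b)"
  then obtain k where k: "Bs z (a*b) k \<subseteq> S" by (auto simp: gen_def)
  have "sprod (Bs z a k) (Bs z b k) \<subseteq> S"
  proof
    fix x assume "x \<in> sprod (Bs z a k) (Bs z b k)"
    then obtain n m where nm: "n \<in> Mk k" "m \<in> Mk k" "x = (a * zpow z n) * (b * zpow z m)"
      by (auto simp: sprod_def Bs_def)
    then have "x = a * b * zpow z (n + m)" using zmul[OF z Mk_pos Mk_pos] by simp
    then show "x \<in> S" using k Mk_add[OF nm(1,2)] unfolding Bs_def by auto
  qed
  moreover have "Bs z a k \<in> gen z a" "Bs z b k \<in> gen z b" by (auto simp: gen_def)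
  ultimately show "S \<in> mm (gen z a) (gen z b)" unfolding mm_def by blast
qed

lemma coinc: assumes "a * zpow z n = b * zpow z m" "n \<in> Mk k" "m \<in> Mk k"
  shows "Bs z b (m + k) \<subseteq> Bs z a k"
proof
  fix x assume "x \<in> Bs z b (m + k)"
  then obtain j where j: "j \<in> Mk (m + k)" "x = b * zpow z j" by (auto simp: Bs_def)
  define d where "d = j - m"
  have "fact k dvd j" using j(1) Mk_mono[of k "m+k"] by (auto simp: Mk_def)
  moreover have "fact k dvd m" using assms(3) by (simp add: Mk_def)
  ultimately have "fact k dvd d" unfolding d_def by (simp add: dvd_diff_nat)
  moreover have "Suc k \<le> d" using j(1) unfolding d_def Mk_def by auto
  ultimately have d: "d \<in> Mk k" by (simp add: Mk_def)
  have jm: "j = m + d" using j(1) unfolding d_def Mk_def by auto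
  have "x = b * (zpow z m * zpow z d)" by (simp add: j(2) jm zpow_add[OF Mk_pos[OF assms(3)] Mk_pos[OF d]])
  also have "\<dots> = (a * zpow z n) * zpow z d" using assms(1) by (simp add: mult.assoc)
  also have "\<dots> = a * zpow z (n + d)" by (simp add: mult.assoc zpow_add[OF Mk_pos[OF assms(2)] Mk_pos[OF d]])
  finally show "x \<in> Bs z a k" using Mk_add[OF assms(2) d] unfolding Bs_def by auto
qed

lemma per: assumes "b * zpow z n1 = b * zpow z (n1 + p)" "0 < n1" "0 < p"
  shows "b * zpow z (n1 + d + t * p) = b * zpow z (n1 + d)"
proof -
  have one: "b * zpow z (n1 + d + p) = b * zpow z (n1 + d)" for d
  proof (cases "d = 0")
    case True then show ?thesis using assms(1) by simp
  next
    case False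
    have "b * zpow z (n1 + d + p) = b * (zpow z (n1 + p) * zpow z d)"
      using zpow_add[of "n1+p" d z] False assms by (simp add: add.commute add.left_commute)
    also have "\<dots> = b * (zpow z n1 * zpow z d)" using assms(1) by (simp add: mult.assoc[symmetric])
    also have "\<dots> = b * zpow z (n1 + d)" using zpow_add[of n1 d z] False assms by simp
    finally show ?thesis .
  qed
  show ?thesis
  proof (induction t)
    case 0 then show ?case by simp
  next
    case (Suc t)
    have eq: "n1 + d + Suc t * p = n1 + (d + t * p) + p" by simp
    have "b * zpow z (n1 + d + Suc t * p) = b * zpow z (n1 + (d + t * p))"
      unfolding eq by (rule one)
    also have "\<dots> = b * zpow z (n1 + d + t * p)" by (simp add: add.assoc)
    finally show ?case using Suc by simp
  qed
qed

lemma periodic_pt: assumes "\<forall>k. x \<in> Bs z b k" shows "\<exists>L. Bs z b L \<subseteq> {x}"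
proof -
  obtain n1 where n1: "n1 \<in> Mk 0" "x = b * zpow z n1" using assms by (auto simp: Bs_def)
  obtain n2 where n2: "n2 \<in> Mk n1" "x = b * zpow z n2" using assms by (auto simp: Bs_def)
  define p where "p = n2 - n1"
  have pp: "0 < p" "n2 = n1 + p" using n2(1) unfolding p_def Mk_def by auto
  have n1p: "0 < n1" using Mk_pos[OF n1(1)] .
  have base: "b * zpow z n1 = b * zpow z (n1 + p)" using n1 n2 pp by simp
  obtain n3 where n3: "n3 \<in> Mk (max p n1)" "x = b * zpow z n3" using assms by (auto simp: Bs_def)
  have "p dvd fact (max p n1)" using pp(1) by (intro dvd_fact) auto
  then have pn3: "p dvd n3" using n3(1) by (auto simp: Mk_def intro: dvd_trans)
  have n13: "n1 \<le> n3" using n3(1) by (auto simp: Mk_def)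
  have "Bs z b (n3 + p) \<subseteq> {x}"
  proof
    fix y assume "y \<in> Bs z b (n3 + p)"
    then obtain j where j: "j \<in> Mk (n3 + p)" "y = b * zpow z j" by (auto simp: Bs_def)
    have "p dvd fact (n3 + p)" using pp(1) by (intro dvd_fact) auto
    then have "p dvd j" using j(1) by (auto simp: Mk_def intro: dvd_trans)
    with pn3 have "p dvd (j - n3)" by (simp add: dvd_diff_nat)
    then obtain t where t: "j - n3 = t * p" by (auto simp: dvd_def mult.commute)
    have "j = n1 + (n3 - n1) + t * p" using t n13 j(1) by (auto simp: Mk_def)
    then have "y = b * zpow z (n1 + (n3 - n1))" using per[OF base n1p pp(1)] j(2) by simp
    also have "\<dots> = x" using n3(2) n13 by simp
    finally show "y \<in> {x}" by simp
  qed
  then show ?thesis by blast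
qed

definition Ys :: "'a::semigroup_mult \<Rightarrow> 'a set set set" where
  "Ys z = range prin \<union> range (gen z)"
definition Ob :: "'a::semigroup_mult \<Rightarrow> 'a set \<Rightarrow> 'a set set set" where
  "Ob z A = {G \<in> Ys z. A \<in> G}"
definition good :: "'a::semigroup_mult \<Rightarrow> 'a set \<Rightarrow> bool" where
  "good z A \<longleftrightarrow> (\<exists>x. A = {x}) \<or> (\<exists>a k. A = Bs z a k)"

lemma fup: "F \<in> Ys z \<Longrightarrow> A \<in> F \<Longrightarrow> A \<subseteq> B \<Longrightarrow> B \<in> F"
  by (auto simp: Ys_def prin_def gen_def)

lemma fint: assumes "F \<in> Ys z" "A \<in> F" "B \<in> F" shows "A \<inter> B \<in> F"
proof -
  consider x where "F = prin x" | a where "F = gen z a" using assms(1) by (auto simp: Ys_def)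
  then show ?thesis
  proof cases
    case 1 then show ?thesis using assms by (auto simp: prin_def)
  next
    case 2
    then obtain k1 k2 where "Bs z a k1 \<subseteq> A" "Bs z a k2 \<subseteq> B" using assms by (auto simp: gen_def)
    then have "Bs z a (max k1 k2) \<subseteq> A \<inter> B"
      using Bs_mono[of k1 "max k1 k2" z a] Bs_mono[of k2 "max k1 k2" z a] by auto
    then show ?thesis using 2 by (auto simp: gen_def)
  qed
qed

lemma fne: "F \<in> Ys z \<Longrightarrow> {} \<notin> F"
  using Bs_ne by (auto simp: Ys_def prin_def gen_def)

lemma funiv: "F \<in> Ys z \<Longrightarrow> UNIV \<in> F"
  by (auto simp: Ys_def prin_def gen_def)

lemma fgood: "F \<in> Ys z \<Longrightarrow> A \<in> F \<Longrightarrow> \<exists>A'. good z A' \<and> A' \<in> F \<and> A' \<subseteq> A"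
  unfolding Ys_def good_def prin_def gen_def by auto

lemma lemL: assumes "good z A" "G \<in> Ys z" "\<forall>B\<in>G. B \<inter> A \<noteq> {}" shows "A \<in> G"
proof -
  consider y where "G = prin y" | b where "G = gen z b" using assms(2) by (auto simp: Ys_def)
  then show ?thesis
  proof cases
    case 1
    then have "{y} \<inter> A \<noteq> {}" using assms(3) by (auto simp: prin_def)
    then show ?thesis using 1 by (auto simp: prin_def)
  next
    case 2
    have hit: "Bs z b k \<inter> A \<noteq> {}" for k using assms(3) 2 by (auto simp: gen_def)
    consider x where "A = {x}" | a k where "A = Bs z a k" using assms(1) by (auto simp: good_def)
    then show ?thesis
    proof cases
      case 1
      then have "\<forall>k. x \<in> Bs z b k" using hit by auto
      then obtain L where "Bs z b L \<subseteq> {x}" using periodic_pt by blast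
      then show ?thesis using 1 2 by (auto simp: gen_def)
    next
      case (2 a k)
      then obtain n m where "n \<in> Mk k" "m \<in> Mk k" "a * zpow z n = b * zpow z m"
        using hit[of k] by (auto simp: Bs_def) (metis)
      then have "Bs z b (m + k) \<subseteq> Bs z a k" by (rule coinc[rotated])
      then show ?thesis using 2 \<open>G = gen z b\<close> by (auto simp: gen_def)
    qed
  qed
qed

lemma single_in: "G \<in> Ys z \<Longrightarrow> {x} \<in> G \<Longrightarrow> G = prin x"
proof (rule set_eqI, rule iffI)
  fix S assume G: "G \<in> Ys z" "{x} \<in> G" and "S \<in> G"
  then have "S \<inter> {x} \<in> G" using fint by blast
  then have "x \<in> S" using fne[OF G(1)] by (cases "x \<in> S") auto
  then show "S \<in> prin x" by (simp add: prin_def)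
next
  fix S assume G: "G \<in> Ys z" "{x} \<in> G" and "S \<in> prin x"
  then show "S \<in> G" using fup[OF G] by (auto simp: prin_def)
qed

definition TT :: "'a::semigroup_mult \<Rightarrow> 'a set set topology" where
  "TT z = topology (\<lambda>U. U \<subseteq> Ys z \<and> (\<forall>F\<in>U. \<exists>A\<in>F. Ob z A \<subseteq> U))"

lemma istop_int:
  assumes S: "S \<subseteq> Ys z" "\<forall>F\<in>S. \<exists>A\<in>F. Ob z A \<subseteq> S"
    and T: "T \<subseteq> Ys z" "\<forall>F\<in>T. \<exists>A\<in>F. Ob z A \<subseteq> T"
    and F: "F \<in> S \<inter> T"
  shows "\<exists>A\<in>F. Ob z A \<subseteq> S \<inter> T"
proof -
  from F S obtain A where A: "A \<in> F" "Ob z A \<subseteq> S" by auto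
  from F T obtain B where B: "B \<in> F" "Ob z B \<subseteq> T" by auto
  have FY: "F \<in> Ys z" using F S by auto
  have "A \<inter> B \<in> F" using fint[OF FY A(1) B(1)] .
  moreover have "Ob z (A \<inter> B) \<subseteq> S \<inter> T"
  proof
    fix G assume "G \<in> Ob z (A \<inter> B)"
    then have "G \<in> Ob z A" "G \<in> Ob z B" unfolding Ob_def using fup[of G z "A \<inter> B"] by auto
    then show "G \<in> S \<inter> T" using A(2) B(2) by blast
  qed
  ultimately show ?thesis by blast
qed

lemma istop: "istopology (\<lambda>U. U \<subseteq> Ys z \<and> (\<forall>F\<in>U. \<exists>A\<in>F. Ob z A \<subseteq> U))"
  unfolding istopology_def
proof (rule conjI; intro allI impI)
  fix S T :: "'a set set set"
  assume S: "S \<subseteq> Ys z \<and> (\<forall>F\<in>S. \<exists>A\<in>F. Ob z A \<subseteq> S)"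
    and T: "T \<subseteq> Ys z \<and> (\<forall>F\<in>T. \<exists>A\<in>F. Ob z A \<subseteq> T)"
  have 1: "S \<inter> T \<subseteq> Ys z" using S by auto
  have 2: "\<forall>F\<in>S \<inter> T. \<exists>A\<in>F. Ob z A \<subseteq> S \<inter> T"
  proof
    fix F assume "F \<in> S \<inter> T"
    then show "\<exists>A\<in>F. Ob z A \<subseteq> S \<inter> T" using istop_int[of S z T F] S T by simp
  qed
  from 1 2 show "S \<inter> T \<subseteq> Ys z \<and> (\<forall>F\<in>S \<inter> T. \<exists>A\<in>F. Ob z A \<subseteq> S \<inter> T)" by (rule conjI)
next
  fix K :: "'a set set set set"
  assume K: "\<forall>S\<in>K. S \<subseteq> Ys z \<and> (\<forall>F\<in>S. \<exists>A\<in>F. Ob z A \<subseteq> S)"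
  have 1: "\<Union>K \<subseteq> Ys z" using K by auto
  have 2: "\<forall>F\<in>\<Union>K. \<exists>A\<in>F. Ob z A \<subseteq> \<Union>K"
  proof
    fix F assume "F \<in> \<Union>K"
    then obtain S where "S \<in> K" "F \<in> S" by auto
    then have "\<exists>A\<in>F. Ob z A \<subseteq> S" using K by blast
    then obtain A where "A \<in> F" "Ob z A \<subseteq> S" by blast
    then show "\<exists>A\<in>F. Ob z A \<subseteq> \<Union>K" using \<open>S \<in> K\<close> by auto
  qed
  from 1 2 show "\<Union>K \<subseteq> Ys z \<and> (\<forall>F\<in>\<Union>K. \<exists>A\<in>F. Ob z A \<subseteq> \<Union>K)" by (rule conjI)
qed

lemma openTT: "openin (TT z) U \<longleftrightarrow> U \<subseteq> Ys z \<and> (\<forall>F\<in>U. \<exists>A\<in>F. Ob z A \<subseteq> U)"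
  unfolding TT_def topology_inverse'[OF istop] ..

lemma topTT: "topspace (TT z) = Ys z"
proof -
  have "openin (TT z) (Ys z)" unfolding openTT
  proof (intro conjI ballI)
    fix F assume "F \<in> Ys z"
    then show "\<exists>A\<in>F. Ob z A \<subseteq> Ys z" using funiv[of F z] unfolding Ob_def by blast
  qed simp
  then have "Ys z \<subseteq> topspace (TT z)" by (rule openin_subset)
  moreover have "topspace (TT z) \<subseteq> Ys z" using openin_topspace[of "TT z"] unfolding openTT by blast
  ultimately show ?thesis by blast
qed

lemma Ob_open: "openin (TT z) (Ob z A)"
  unfolding openTT Ob_def using fup by blast

lemma Ob_closed: assumes "good z A" shows "openin (TT z) (Ys z - Ob z A)"
  unfolding openTT
proof (intro conjI ballI)
  fix G assume G: "G \<in> Ys z - Ob z A"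
  then have "A \<notin> G" by (auto simp: Ob_def)
  then obtain B where B: "B \<in> G" "B \<inter> A = {}" using lemL[OF assms] G by blast
  have "Ob z B \<subseteq> Ys z - Ob z A"
  proof
    fix H assume "H \<in> Ob z B"
    then have H: "H \<in> Ys z" "B \<in> H" by (auto simp: Ob_def)
    have "A \<notin> H" using fint[OF H(1) H(2)] fne[OF H(1)] B(2) by (metis Int_commute)
    then show "H \<in> Ys z - Ob z A" using H by (auto simp: Ob_def)
  qed
  then show "\<exists>B\<in>G. Ob z B \<subseteq> Ys z - Ob z A" using B by blast
qed auto

lemma mm_Y: assumes z: "z \<in> center" "F \<in> Ys z" "G \<in> Ys z" shows "mm F G \<in> Ys z"
proof -
  consider x y where "F = prin x" "G = prin y" | x b where "F = prin x" "G = gen z b"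
    | a y where "F = gen z a" "G = prin y" | a b where "F = gen z a" "G = gen z b"
    using z(2,3) unfolding Ys_def by blast
  then show ?thesis
  proof cases
    case 1 then show ?thesis by (simp add: mm_prin_prin Ys_def)
  next
    case 2 then show ?thesis by (simp add: mm_prin_gen Ys_def)
  next
    case 3 then show ?thesis by (simp add: mm_gen_prin[OF z(1)] Ys_def)
  next
    case 4 then show ?thesis by (simp add: mm_gen_gen[OF z(1)] Ys_def)
  qed
qed

lemma cont: assumes z: "z \<in> center"
  shows "continuous_map (prod_topology (TT z) (TT z)) (TT z) (\<lambda>p. mm (fst p) (snd p))"
  unfolding continuous_map_openin_preimage_eq
proof (intro conjI allI impI)
  show "(\<lambda>p. mm (fst p) (snd p)) \<in> topspace (prod_topology (TT z) (TT z)) \<rightarrow> topspace (TT z)"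
    using mm_Y[OF z] by (auto simp: topTT)
next
  fix U assume U: "openin (TT z) U"
  let ?P = "topspace (prod_topology (TT z) (TT z)) \<inter> (\<lambda>p. mm (fst p) (snd p)) -` U"
  show "openin (prod_topology (TT z) (TT z)) ?P"
    unfolding openin_prod_topology_alt
  proof (intro allI impI)
    fix F G assume FG: "(F, G) \<in> ?P"
    then have FY: "F \<in> Ys z" "G \<in> Ys z" "mm F G \<in> U" by (auto simp: topTT)
    then obtain A where A: "A \<in> mm F G" "Ob z A \<subseteq> U" using U unfolding openTT by blast
    then obtain A1 A2 where A12: "A1 \<in> F" "A2 \<in> G" "sprod A1 A2 \<subseteq> A" unfolding mm_def by blast
    have "Ob z A1 \<times> Ob z A2 \<subseteq> ?P"
    proof
      fix p assume "p \<in> Ob z A1 \<times> Ob z A2"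
      then obtain F' G' where p: "p = (F', G')" "F' \<in> Ys z" "G' \<in> Ys z" "A1 \<in> F'" "A2 \<in> G'"
        by (auto simp: Ob_def)
      then have "A \<in> mm F' G'" using A12(3) unfolding mm_def by blast
      then have "mm F' G' \<in> Ob z A" using mm_Y[OF z p(2,3)] by (simp add: Ob_def)
      then show "p \<in> ?P" using A(2) p by (auto simp: topTT)
    qed
    moreover have "F \<in> Ob z A1" "G \<in> Ob z A2" using FY A12 by (auto simp: Ob_def)
    ultimately show "\<exists>U V. openin (TT z) U \<and> openin (TT z) V \<and> F \<in> U \<and> G \<in> V \<and> U \<times> V \<subseteq> ?P"
      using Ob_open by blast
  qed
qed

lemma haus: "Hausdorff_space (TT z)"
  unfolding Hausdorff_space_def topTT
proof (intro allI impI)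
  fix F G assume H: "F \<in> Ys z \<and> G \<in> Ys z \<and> F \<noteq> G"
  have sep: "\<exists>U V. openin (TT z) U \<and> openin (TT z) V \<and> F1 \<in> U \<and> G1 \<in> V \<and> disjnt U V \<and> disjnt V U"
    if asm: "F1 \<in> Ys z" "G1 \<in> Ys z" "S \<in> F1" "S \<notin> G1" for F1 G1 S
  proof -
    obtain A where A: "good z A" "A \<in> F1" "A \<subseteq> S" using fgood[OF asm(1,3)] by blast
    have "A \<notin> G1" using fup[OF asm(2) _ A(3)] asm(4) by blast
    then have "F1 \<in> Ob z A" "G1 \<in> Ys z - Ob z A" using asm A by (auto simp: Ob_def)
    moreover have "disjnt (Ob z A) (Ys z - Ob z A)" "disjnt (Ys z - Ob z A) (Ob z A)" by (auto simp: disjnt_def)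
    ultimately show ?thesis using Ob_open Ob_closed[OF A(1)] by blast
  qed
  from H have "(\<exists>S. S \<in> F \<and> S \<notin> G) \<or> (\<exists>S. S \<in> G \<and> S \<notin> F)" by blast
  then show "\<exists>U V. openin (TT z) U \<and> openin (TT z) V \<and> F \<in> U \<and> G \<in> V \<and> disjnt U V"
  proof
    assume "\<exists>S. S \<in> F \<and> S \<notin> G"
    then show ?thesis using sep[of F G] H by blast
  next
    assume "\<exists>S. S \<in> G \<and> S \<notin> F"
    then obtain S where "S \<in> G" "S \<notin> F" by blast
    then obtain U V where "openin (TT z) U" "openin (TT z) V" "G \<in> U" "F \<in> V" "disjnt V U"
      using sep[of G F S] H by blast
    then show ?thesis by blast
  qed
qed

lemma zdim: "zero_dimensional_space (TT z)"
  unfolding zero_dimensional_space_def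
proof (intro allI impI)
  fix U F assume UF: "openin (TT z) U \<and> F \<in> U"
  then have FY: "F \<in> Ys z" unfolding openTT by blast
  obtain A where A: "A \<in> F" "Ob z A \<subseteq> U" using UF unfolding openTT by blast
  obtain A' where A': "good z A'" "A' \<in> F" "A' \<subseteq> A" using fgood[OF FY A(1)] by blast
  have "Ob z A' \<subseteq> Ob z A" using fup A'(3) unfolding Ob_def by blast
  moreover have "closedin (TT z) (Ob z A')"
    unfolding closedin_def topTT using Ob_closed[OF A'(1)] by (auto simp: Ob_def)
  moreover have "F \<in> Ob z A'" using FY A' by (simp add: Ob_def)
  ultimately show "\<exists>V. openin (TT z) V \<and> closedin (TT z) V \<and> F \<in> V \<and> V \<subseteq> U"
    using Ob_open A(2) by blast
qed

lemma prin_inj: "inj prin"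
proof (rule injI)
  fix x y :: 'a assume "prin x = prin y"
  moreover have "{x} \<in> prin x" by (simp add: prin_def)
  ultimately have "{x} \<in> prin y" by simp
  then show "x = y" by (simp add: prin_def)
qed

lemma prin_Y: "prin x \<in> Ys z" by (simp add: Ys_def)

lemma emb: "iso_top_embedding (TT z) mm prin"
  unfolding iso_top_embedding_def
proof (intro conjI allI)
  show "inj prin" by (rule prin_inj)
  fix x y show "prin (x * y) = mm (prin x) (prin y)" by (simp add: mm_prin_prin)
next
  show "embedding_map (discrete_topology UNIV) (TT z) prin"
  proof (rule injective_open_imp_embedding_map)
    show "continuous_map (discrete_topology UNIV) (TT z) prin"
      by (simp add: topTT prin_Y)
    show "inj_on prin (topspace (discrete_topology UNIV))" using prin_inj by (simp add: inj_on_def inj_def)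
    show "open_map (discrete_topology UNIV) (TT z) prin"
      unfolding open_map_def
    proof (intro allI impI)
      fix U :: "'a set"
      show "openin (TT z) (prin ` U)" unfolding openTT
      proof (intro conjI ballI)
        show "prin ` U \<subseteq> Ys z" using prin_Y by blast
        fix F assume "F \<in> prin ` U"
        then obtain x where x: "x \<in> U" "F = prin x" by blast
        have "Ob z {x} \<subseteq> prin ` U"
        proof
          fix G assume "G \<in> Ob z {x}"
          then have "G = prin x" using single_in by (auto simp: Ob_def)
          then show "G \<in> prin ` U" using x by blast
        qed
        moreover have "{x} \<in> F" using x by (simp add: prin_def)
        ultimately show "\<exists>A\<in>F. Ob z A \<subseteq> prin ` U" by blast
      qed
    qed
  qed
qed

lemma spow_period: assumes "spow z (2*c) = spow z c" "c \<le> t"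
  shows "spow z (t + c) = spow z t"
proof (cases "t = c")
  case True then show ?thesis using assms by (simp add: mult_2)
next
  case False
  then have t: "t = c + (t - c - 1) + 1" using assms(2) by simp
  have "spow z (t + c) = spow z (2*c + (t - c - 1) + 1)" using t by (metis add.commute add.left_commute mult_2)
  also have "\<dots> = spow z (2*c) * spow z (t - c - 1)" by (simp only: spow_add)
  also have "\<dots> = spow z c * spow z (t - c - 1)" using assms(1) by simp
  also have "\<dots> = spow z t" using t by (metis spow_add)
  finally show ?thesis .
qed

lemma gen_not_prin: assumes np: "\<forall>n. spow z n * spow z n \<noteq> spow z n"
  shows "gen z z \<notin> range prin"
proof
  assume "gen z z \<in> range prin"
  then obtain x where "gen z z = prin x" by blast
  then have "{x} \<in> gen z z" by (simp add: prin_def)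
  then obtain k where k: "Bs z z k \<subseteq> {x}" by (auto simp: gen_def)
  define c where "c = fact k * Suc k"
  have c1: "c \<in> Mk k" unfolding c_def by (rule Mk_elem)
  then have c2: "2 * c \<in> Mk k" using Mk_add[OF c1 c1] by (simp add: mult_2)
  have cpos: "0 < c" using Mk_pos[OF c1] .
  have "z * zpow z c = x" "z * zpow z (2*c) = x" using k c1 c2 unfolding Bs_def by auto
  moreover have "z * zpow z n = spow z n" if "0 < n" for n
    using that unfolding zpow_def by (cases n) auto
  ultimately have eq: "spow z (2*c) = spow z c" using cpos by (metis mult_pos_pos zero_less_numeral)
  define N where "N = 2*c - 1"
  have "spow z N * spow z N = spow z (N + N + 1)" by (rule spow_add)
  also have "N + N + 1 = (3*c - 1) + c" unfolding N_def using cpos by simp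
  also have "spow z (3*c - 1 + c) = spow z (3*c - 1)" by (rule spow_period[OF eq]) (use cpos in simp)
  also have "3*c - 1 = N + c" unfolding N_def using cpos by simp
  also have "spow z (N + c) = spow z N" by (rule spow_period[OF eq]) (use cpos in \<open>simp add: N_def\<close>)
  finally show False using np by blast
qed

lemma not_closed: assumes np: "\<forall>n. spow z n * spow z n \<noteq> spow z n"
  shows "\<not> closedin (TT z) (range prin)"
proof
  assume "closedin (TT z) (range prin)"
  then have op: "openin (TT z) (Ys z - range prin)" unfolding closedin_def topTT by blast
  have "gen z z \<in> Ys z - range prin" using gen_not_prin[OF np] by (simp add: Ys_def)
  then obtain A where A: "A \<in> gen z z" "Ob z A \<subseteq> Ys z - range prin" using op unfolding openTT by blast
  then obtain k where k: "Bs z z k \<subseteq> A" by (auto simp: gen_def)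
  obtain y where "y \<in> Bs z z k" using Bs_ne by blast
  then have "y \<in> A" using k by blast
  then have "prin y \<in> Ob z A" using prin_Y[of y z] by (simp add: Ob_def prin_def)
  then show False using A(2) by blast
qed

theorem lemma5p4:
  assumes "TzS_closed_in TYPE('a set set) TYPE('a::semigroup_mult)"
  shows "periodic_set (center :: 'a set)"
proof (rule ccontr)
  assume "\<not> periodic_set (center :: 'a set)"
  then obtain z :: 'a where z: "z \<in> center" "\<forall>n. spow z n * spow z n \<noteq> spow z n"
    unfolding periodic_set_def by blast
  have "TzS (TT z) mm"
    unfolding TzS_def topological_semigroup_def
    using mm_assoc cont[OF z(1)] haus zdim by blast
  moreover note emb[of z]
  ultimately have "closedin (TT z) (range (prin :: 'a \<Rightarrow> 'a set set))"
    using assms unfolding TzS_closed_in_def by blast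
  then show False using not_closed[OF z(2)] by blast
qed

end
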